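(* Let $(W,S)$ be a Coxeter system with $S$ finite, $\Gamma$ a totally ordered abelian group, $\varphi:W\to\Gamma$ a weight function, $p$ a prime and $G$ a finite $p$-group of automorphisms of $W$ with $\sigma(S)=S$ and $\varphi\circ\sigma=\varphi$ for all $\sigma\in G$. Then $(\mathrm{br}_G(T_w))_{w\in W^G}$ is an $\mathbb{F}_p[\Gamma]$-basis of the $\mathbb{F}_p[\Gamma]$-algebra $\mathrm{Br}_G(\mathcal{H})$.
   Context: A weight function satisfies $\varphi(ww')=\varphi(w)+\varphi(w')$ whenever $\ell(ww')=\ell(w)+\ell(w')$. $A=\mathbb{Z}[\Gamma]=\bigoplus_\gamma\mathbb{Z}e^\gamma$. $\mathcal{H}$ is the Hecke algebra over $A$: free $A$-module with basis $(T_w)_{w\in W}$, with $T_wT_{w'}=T_{ww'}$ if $\ell(ww')=\ell(w)+\ell(w')$ and $(T_s-e^{\varphi(s)})(T_s+e^{-\varphi(s)})=0$ for $s\in S$. $G$ acts on $\mathcal{H}$ by $A$-algebra automorphisms via $\sigma(T_w)=T_{\sigma(w)}$. Brauer quotient: for an $RG$-module $M$ and $H\le G$, $\mathrm{Tr}_H^G:M^H\to M^G$, $m\mapsto\sum_{\sigma\in[G/H]}\sigma(m)$ ($[G/H]$ a set of coset representatives); $\mathrm{Tr}(M)=\sum_{H<G}\mathrm{Tr}_H^G(M^H)$ (sum over proper subgroups); $\mathrm{Br}_G(M)=M^G/\mathrm{Tr}(M)$ with canonical map $\mathrm{br}_G:M^G\to\mathrm{Br}_G(M)$. For $M=\mathcal{H}$,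 $\mathrm{Tr}(\mathcal{H})$ is a two-sided ideal of $\mathcal{H}^G$ containing $p\mathcal{H}^G$, so $\mathrm{Br}_G(\mathcal{H})$ is an $\mathbb{F}_p[\Gamma]$-algebra. *)

theory Defs
  imports "HOL-Algebra.Algebra"
begin

fun word_eval :: "('w, 'b) monoid_scheme \<Rightarrow> 'w list \<Rightarrow> 'w" where
  "word_eval W [] = \<one>\<^bsub>W\<^esub>"
| "word_eval W (s # ws) = s \<otimes>\<^bsub>W\<^esub> word_eval W ws"

text \<open>Coxeter relators: s s and (s t)^(m(s,t)) with m(s,t) the order of s t
  (order 0 = infinite order, giving the trivial relator).\<close>
definition coxeter_relators :: "('w, 'b) monoid_scheme \<Rightarrow> 'w set \<Rightarrow> 'w list set" where
  "coxeter_relators W S =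
     {[s, s] | s. s \<in> S} \<union>
     {concat (replicate (group.ord W (s \<otimes>\<^bsub>W\<^esub> t)) [s, t]) | s t. s \<in> S \<and> t \<in> S}"

inductive coxeter_equiv :: "('w, 'b) monoid_scheme \<Rightarrow> 'w set \<Rightarrow> 'w list \<Rightarrow> 'w list \<Rightarrow> bool"
  for W S where
  refl: "coxeter_equiv W S u u"
| sym: "coxeter_equiv W S u v \<Longrightarrow> coxeter_equiv W S v u"
| trans: "coxeter_equiv W S u v \<Longrightarrow> coxeter_equiv W S v x \<Longrightarrow> coxeter_equiv W S u x"
| rel: "r \<in> coxeter_relators W S \<Longrightarrow> coxeter_equiv W S (u @ r @ v) (u @ v)"

text \<open>(W,S) is a Coxeter system: S is a generating set of involutions and
  W has the presentation < S | s^2, (st)^(m(s,t)) >, i.e. every word in S that is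
  trivial in W is trivial in the presented group.\<close>
definition coxeter_system :: "('w, 'b) monoid_scheme \<Rightarrow> 'w set \<Rightarrow> bool" where
  "coxeter_system W S \<longleftrightarrow>
     group W \<and> S \<subseteq> carrier W \<and> \<one>\<^bsub>W\<^esub> \<notin> S \<and>
     (\<forall>s\<in>S. s \<otimes>\<^bsub>W\<^esub> s = \<one>\<^bsub>W\<^esub>) \<and>
     generate W S = carrier W \<and>
     (\<forall>ws. set ws \<subseteq> S \<and> word_eval W ws = \<one>\<^bsub>W\<^esub> \<longrightarrow> coxeter_equiv W S ws [])"

definition coxeter_length :: "('w, 'b) monoid_scheme \<Rightarrow> 'w set \<Rightarrow> 'w \<Rightarrow> nat" where
  "coxeter_length W S w = (LEAST n. \<exists>ws. set ws \<subseteq> S \<and> length ws = n \<and> word_eval W ws = w)"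

definition weight_function ::
  "('w, 'b) monoid_scheme \<Rightarrow> 'w set \<Rightarrow> ('w \<Rightarrow> 'g::ab_group_add) \<Rightarrow> bool" where
  "weight_function W S \<phi> \<longleftrightarrow>
     (\<forall>w\<in>carrier W. \<forall>w'\<in>carrier W.
        coxeter_length W S (w \<otimes>\<^bsub>W\<^esub> w') = coxeter_length W S w + coxeter_length W S w'
        \<longrightarrow> \<phi> (w \<otimes>\<^bsub>W\<^esub> w') = \<phi> w + \<phi> w')"

text \<open>Elements of A = Z[Gamma]: finitely supported functions Gamma -> Z
  (a corresponds to sum a(gamma) e^gamma).\<close>
definition group_ring_elems :: "('g \<Rightarrow> int) set" where
  "group_ring_elems = {a. finite {\<gamma>. a \<gamma> \<noteq> 0}}"

text \<open>Elements of H: h corresponds to sum_w (sum_gamma h w gamma e^gamma) T_w.\<close>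
definition hecke_elems :: "('w, 'b) monoid_scheme \<Rightarrow> ('w \<Rightarrow> 'g \<Rightarrow> int) set" where
  "hecke_elems W = {h. finite {(w, \<gamma>). h w \<gamma> \<noteq> 0} \<and> (\<forall>w. w \<notin> carrier W \<longrightarrow> h w = (\<lambda>\<gamma>. 0))}"

definition hecke_T :: "'w \<Rightarrow> 'w \<Rightarrow> 'g::zero \<Rightarrow> int" where
  "hecke_T w = (\<lambda>v \<gamma>. if v = w \<and> \<gamma> = 0 then 1 else 0)"

definition hecke_scal :: "('g::ab_group_add \<Rightarrow> int) \<Rightarrow> ('w \<Rightarrow> 'g \<Rightarrow> int) \<Rightarrow> 'w \<Rightarrow> 'g \<Rightarrow> int" where
  "hecke_scal a h = (\<lambda>v \<gamma>. \<Sum>\<delta>\<in>{\<delta>. a \<delta> \<noteq> 0}. a \<delta> * h v (\<gamma> - \<delta>))"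

text \<open>Action of an automorphism sigma of W on H: the A-linear map with
  sigma(T_w) = T_(sigma w).\<close>
definition hecke_act :: "('w, 'b) monoid_scheme \<Rightarrow> ('w \<Rightarrow> 'w) \<Rightarrow> ('w \<Rightarrow> 'g \<Rightarrow> int) \<Rightarrow> 'w \<Rightarrow> 'g \<Rightarrow> int" where
  "hecke_act W \<sigma> h = (\<lambda>v. if v \<in> carrier W then h (inv_into (carrier W) \<sigma> v) else (\<lambda>\<gamma>. 0))"

definition hecke_fixed :: "('w, 'b) monoid_scheme \<Rightarrow> ('w \<Rightarrow> 'w) set \<Rightarrow> ('w \<Rightarrow> 'g \<Rightarrow> int) set" where
  "hecke_fixed W K = {h \<in> hecke_elems W. \<forall>\<sigma>\<in>K. hecke_act W \<sigma> h = h}"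

definition left_coset_reps :: "('w, 'b) monoid_scheme \<Rightarrow> ('w \<Rightarrow> 'w) set \<Rightarrow> ('w \<Rightarrow> 'w) set \<Rightarrow> ('w \<Rightarrow> 'w) set set" where
  "left_coset_reps W G K =
     {R. R \<subseteq> G \<and> (\<forall>\<tau>\<in>G. \<exists>!\<sigma>. \<sigma> \<in> R \<and> \<tau> \<in> \<sigma> <#\<^bsub>AutoGroup W\<^esub> K)}"

definition rel_trace :: "('w, 'b) monoid_scheme \<Rightarrow> ('w \<Rightarrow> 'w) set \<Rightarrow> ('w \<Rightarrow> 'w) set \<Rightarrow> ('w \<Rightarrow> 'g \<Rightarrow> int) \<Rightarrow> 'w \<Rightarrow> 'g \<Rightarrow> int" where
  "rel_trace W G K h =
     (\<lambda>v \<gamma>. \<Sum>\<sigma>\<in>(SOME R. R \<in> left_coset_reps W G K). hecke_act W \<sigma> h v \<gamma>)"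

definition proper_subgroups :: "('w, 'b) monoid_scheme \<Rightarrow> ('w \<Rightarrow> 'w) set \<Rightarrow> ('w \<Rightarrow> 'w) set set" where
  "proper_subgroups W G = {K. subgroup K (AutoGroup W) \<and> K \<subset> G}"

definition trace_ideal :: "('w, 'b) monoid_scheme \<Rightarrow> ('w \<Rightarrow> 'w) set \<Rightarrow> ('w \<Rightarrow> 'g \<Rightarrow> int) set" where
  "trace_ideal W G =
     {x. \<exists>hs. (\<forall>K\<in>proper_subgroups W G. hs K \<in> hecke_fixed W K) \<and>
            x = (\<lambda>v \<gamma>. \<Sum>K\<in>proper_subgroups W G. rel_trace W G K (hs K) v \<gamma>)}"

definition fixed_elems :: "('w, 'b) monoid_scheme \<Rightarrow> ('w \<Rightarrow> 'w) set \<Rightarrow> 'w set" where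
  "fixed_elems W G = {w \<in> carrier W. \<forall>\<sigma>\<in>G. \<sigma> w = w}"

definition hecke_comb :: "'w set \<Rightarrow> ('w \<Rightarrow> 'g::ab_group_add \<Rightarrow> int) \<Rightarrow> 'w \<Rightarrow> 'g \<Rightarrow> int" where
  "hecke_comb F a = (\<lambda>v \<gamma>. \<Sum>w\<in>F. hecke_scal (a w) (hecke_T w) v \<gamma>)"

text \<open>(br_G(T_w))_{w in W^G} is an F_p[Gamma]-basis of Br_G(H) = H^G / Tr(H),
  where F_p[Gamma] = A / pA acts through A (p H^G is contained in Tr(H)):
  (1) spanning: every x in H^G is congruent mod Tr(H) to an A-combination of
      the T_w, w in W^G;
  (2) linear independence over F_p[Gamma]: if an A-combination of the T_w
      (w in W^G, distinct) lies in Tr(H), all coefficients lie in pA.\<close>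
definition brauer_basis :: "nat \<Rightarrow> ('w, 'b) monoid_scheme \<Rightarrow> ('w \<Rightarrow> 'w) set \<Rightarrow> 'g::ab_group_add itself \<Rightarrow> bool" where
  "brauer_basis p W G (_ :: 'g itself) \<longleftrightarrow>
     (\<forall>x \<in> (hecke_fixed W G :: ('w \<Rightarrow> 'g \<Rightarrow> int) set).
        \<exists>F a. finite F \<and> F \<subseteq> fixed_elems W G \<and> (\<forall>w\<in>F. a w \<in> group_ring_elems) \<and>
              (\<lambda>v \<gamma>. x v \<gamma> - hecke_comb F a v \<gamma>) \<in> trace_ideal W G) \<and>
     (\<forall>F (a :: 'w \<Rightarrow> 'g \<Rightarrow> int). finite F \<and> F \<subseteq> fixed_elems W G \<and>
        (\<forall>w\<in>F. a w \<in> group_ring_elems) \<and> hecke_comb F a \<in> trace_ideal W G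
        \<longrightarrow> (\<forall>w\<in>F. \<forall>\<gamma>. int p dvd a w \<gamma>))"

end

theory Submission
  imports Defs
begin

lemma (in group) lcoset_reps_exist:
  assumes G': "subgroup G' G" and K: "subgroup K G" and KG: "K \<subseteq> G'"
  shows "\<exists>R. R \<subseteq> G' \<and> (\<forall>\<tau>\<in>G'. \<exists>!\<sigma>. \<sigma> \<in> R \<and> \<tau> \<in> \<sigma> <# K)"
proof -
  define rep where "rep C = (SOME \<sigma>. \<sigma> \<in> C)" for C :: "'a set"
  have Gc: "\<And>x. x \<in> G' \<Longrightarrow> x \<in> carrier G" by (rule subgroup.mem_carrier[OF G'])
  have self: "\<And>x. x \<in> G' \<Longrightarrow> x \<in> x <# K" by (rule lcos_self[OF Gc K])
  have repin: "\<And>x. x \<in> G' \<Longrightarrow> rep (x <# K) \<in> x <# K"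
    unfolding rep_def by (rule someI, rule self)
  have cosG: "\<And>x y. x \<in> G' \<Longrightarrow> y \<in> x <# K \<Longrightarrow> y \<in> G'"
  proof -
    fix x y assume x: "x \<in> G'" and "y \<in> x <# K"
    then obtain k where k: "k \<in> K" "y = x \<otimes> k" unfolding l_coset_def by auto
    have "k \<in> G'" using k(1) KG by (rule subsetD[rotated])
    thus "y \<in> G'" unfolding k(2) by (rule subgroup.m_closed[OF G' x])
  qed
  have eq: "\<And>x y. x \<in> G' \<Longrightarrow> y \<in> x <# K \<Longrightarrow> y <# K = x <# K"
    by (rule HOL.sym, rule l_repr_independence[OF _ Gc K])
  define R where "R = (\<lambda>x. rep (x <# K)) ` G'"
  have RG: "R \<subseteq> G'" unfolding R_def using repin cosG by auto
  moreover have "\<forall>\<tau>\<in>G'. \<exists>!\<sigma>. \<sigma> \<in> R \<and> \<tau> \<in> \<sigma> <# K"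
  proof
    fix \<tau> assume t: "\<tau> \<in> G'"
    show "\<exists>!\<sigma>. \<sigma> \<in> R \<and> \<tau> \<in> \<sigma> <# K"
    proof (rule ex1I)
      have "rep (\<tau> <# K) <# K = \<tau> <# K" by (rule eq[OF t repin[OF t]])
      thus "rep (\<tau> <# K) \<in> R \<and> \<tau> \<in> rep (\<tau> <# K) <# K"
        using t self[OF t] unfolding R_def by simp
    next
      fix \<sigma> assume s: "\<sigma> \<in> R \<and> \<tau> \<in> \<sigma> <# K"
      then obtain x where x: "x \<in> G'" "\<sigma> = rep (x <# K)" unfolding R_def by auto
      have 1: "\<sigma> <# K = x <# K" unfolding x(2) by (rule eq[OF x(1) repin[OF x(1)]])
      have "\<sigma> \<in> G'" using s RG by auto
      hence 2: "\<tau> <# K = \<sigma> <# K" using s by (intro eq) auto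
      show "\<sigma> = rep (\<tau> <# K)" using x 1 2 by simp
    qed
  qed
  ultimately show ?thesis by (intro exI conjI)
qed

lemma (in group) lcoset_reps_card:
  assumes G': "subgroup G' G" and K: "subgroup K G" and KG: "K \<subseteq> G'" and fin: "finite G'"
    and R: "R \<subseteq> G'" "\<forall>\<tau>\<in>G'. \<exists>!\<sigma>. \<sigma> \<in> R \<and> \<tau> \<in> \<sigma> <# K"
  shows "card G' = card R * card K"
proof -
  have Gc: "\<And>x. x \<in> G' \<Longrightarrow> x \<in> carrier G" by (rule subgroup.mem_carrier[OF G'])
  have Kc: "K \<subseteq> carrier G" by (rule subgroup.subset[OF K])
  have cosG: "\<And>x y. x \<in> G' \<Longrightarrow> y \<in> x <# K \<Longrightarrow> y \<in> G'"
  proof -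
    fix x y assume x: "x \<in> G'" and "y \<in> x <# K"
    then obtain k where k: "k \<in> K" "y = x \<otimes> k" unfolding l_coset_def by auto
    have "k \<in> G'" using k(1) KG by (rule subsetD[rotated])
    thus "y \<in> G'" unfolding k(2) by (rule subgroup.m_closed[OF G' x])
  qed
  have U: "G' = (\<Union>\<sigma>\<in>R. \<sigma> <# K)"
  proof (rule equalityI)
    show "G' \<subseteq> (\<Union>\<sigma>\<in>R. \<sigma> <# K)"
    proof
      fix \<tau> assume "\<tau> \<in> G'"
      hence "\<exists>!\<sigma>. \<sigma> \<in> R \<and> \<tau> \<in> \<sigma> <# K" using R(2) by simp
      thus "\<tau> \<in> (\<Union>\<sigma>\<in>R. \<sigma> <# K)" by (elim ex1E) auto
    qed
    show "(\<Union>\<sigma>\<in>R. \<sigma> <# K) \<subseteq> G'"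
      using R(1) cosG by auto
  qed
  have finR: "finite R" using R(1) fin by (rule finite_subset)
  have "card (\<Union>\<sigma>\<in>R. \<sigma> <# K) = (\<Sum>\<sigma>\<in>R. card (\<sigma> <# K))"
  proof (rule card_UN_disjoint[OF finR])
    show "\<forall>i\<in>R. finite (i <# K)"
    proof
      fix i assume "i \<in> R"
      hence "i <# K \<subseteq> G'" using U by auto
      thus "finite (i <# K)" using fin by (rule finite_subset)
    qed
    show "\<forall>i\<in>R. \<forall>j\<in>R. i \<noteq> j \<longrightarrow> (i <# K) \<inter> (j <# K) = {}"
    proof (intro ballI impI)
      fix i j assume ij: "i \<in> R" "j \<in> R" "i \<noteq> j"
      show "(i <# K) \<inter> (j <# K) = {}"
      proof (rule ccontr)
        assume "(i <# K) \<inter> (j <# K) \<noteq> {}"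
        then obtain \<tau> where t: "\<tau> \<in> i <# K" "\<tau> \<in> j <# K" by auto
        have "\<tau> \<in> G'" using t(1) ij(1) R(1) cosG by auto
        hence "\<exists>!\<sigma>. \<sigma> \<in> R \<and> \<tau> \<in> \<sigma> <# K" using R(2) by simp
        then obtain s0 where "\<forall>y. y \<in> R \<and> \<tau> \<in> y <# K \<longrightarrow> y = s0" by (elim ex1E) auto
        hence "i = s0" "j = s0" using ij t by auto
        hence "i = j" by simp
        thus False using ij(3) by simp
      qed
    qed
  qed
  also have "\<dots> = (\<Sum>\<sigma>\<in>R. card K)"
  proof (rule sum.cong[OF HOL.refl])
    fix \<sigma> assume "\<sigma> \<in> R"
    hence s: "\<sigma> \<in> carrier G" using R(1) Gc by auto
    have "\<sigma> <# K = (\<lambda>y. \<sigma> \<otimes> y) ` K" unfolding l_coset_def by auto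
    moreover have "inj_on (\<lambda>y. \<sigma> \<otimes> y) K" by (rule inj_on_g'[OF Kc s])
    ultimately show "card (\<sigma> <# K) = card K" by (simp add: card_image)
  qed
  finally show ?thesis using U by simp
qed

lemma AG_carrier: "carrier (AutoGroup W) = auto W"
  by (simp add: AutoGroup_def)

lemma AG_bij: "\<sigma> \<in> carrier (AutoGroup W) \<Longrightarrow> bij_betw \<sigma> (carrier W) (carrier W)"
  by (simp add: AutoGroup_def auto_def Bij_def)

lemma AG_mult: "\<sigma> \<in> carrier (AutoGroup W) \<Longrightarrow> \<tau> \<in> carrier (AutoGroup W) \<Longrightarrow> w \<in> carrier W
   \<Longrightarrow> (\<sigma> \<otimes>\<^bsub>AutoGroup W\<^esub> \<tau>) w = \<sigma> (\<tau> w)"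
  by (simp add: AutoGroup_def BijGroup_def auto_def compose_def)

lemma AG_one: "w \<in> carrier W \<Longrightarrow> \<one>\<^bsub>AutoGroup W\<^esub> w = w"
  by (simp add: AutoGroup_def BijGroup_def)

lemma AG_inv_app:
  assumes "group W" "\<sigma> \<in> carrier (AutoGroup W)" "w \<in> carrier W"
  shows "(inv\<^bsub>AutoGroup W\<^esub> \<sigma>) (\<sigma> w) = w"
proof -
  interpret A: group "AutoGroup W" using assms(1) group.AutoGroup by blast
  have "(inv\<^bsub>AutoGroup W\<^esub> \<sigma>) (\<sigma> w) = (inv\<^bsub>AutoGroup W\<^esub> \<sigma> \<otimes>\<^bsub>AutoGroup W\<^esub> \<sigma>) w"
    using AG_mult assms by (metis A.inv_closed)
  also have "\<dots> = w" using assms AG_one by simp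
  finally show ?thesis .
qed

lemma act_fixed_iff:
  assumes h: "h \<in> hecke_elems W" and b: "bij_betw \<sigma> (carrier W) (carrier W)"
  shows "hecke_act W \<sigma> h = h \<longleftrightarrow> (\<forall>u\<in>carrier W. h (\<sigma> u) = h u)"
proof
  assume e: "hecke_act W \<sigma> h = h"
  show "\<forall>u\<in>carrier W. h (\<sigma> u) = h u"
  proof
    fix u assume u: "u \<in> carrier W"
    have su: "\<sigma> u \<in> carrier W" using b u bij_betwE by blast
    have "inv_into (carrier W) \<sigma> (\<sigma> u) = u" using b u bij_betw_inv_into_left by fastforce
    hence "hecke_act W \<sigma> h (\<sigma> u) = h u" using su by (simp add: hecke_act_def)
    thus "h (\<sigma> u) = h u" using e by simp
  qed
next
  assume i: "\<forall>u\<in>carrier W. h (\<sigma> u) = h u"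
  show "hecke_act W \<sigma> h = h"
  proof
    fix v
    show "hecke_act W \<sigma> h v = h v"
    proof (cases "v \<in> carrier W")
      case True
      have iv: "inv_into (carrier W) \<sigma> v \<in> carrier W" using b True
        by (metis bij_betw_def inv_into_into)
      have "\<sigma> (inv_into (carrier W) \<sigma> v) = v" using b True bij_betw_inv_into_right by fastforce
      hence "h v = h (inv_into (carrier W) \<sigma> v)" using i iv by metis
      thus ?thesis using True by (simp add: hecke_act_def)
    next
      case False
      thus ?thesis using h by (simp add: hecke_act_def hecke_elems_def)
    qed
  qed
qed

lemma scal_T:
  fixes a :: "'g::ab_group_add \<Rightarrow> int"
  assumes "finite {\<delta>. a \<delta> \<noteq> 0}"
  shows "hecke_scal a (hecke_T w) v \<gamma> = (if v = w then a \<gamma> else 0)"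
proof -
  have "hecke_scal a (hecke_T w) v \<gamma> = (\<Sum>\<delta>\<in>{\<delta>. a \<delta> \<noteq> 0}. if \<delta> = \<gamma> then (if v = w then a \<delta> else 0) else 0)"
    unfolding hecke_scal_def hecke_T_def by (rule sum.cong) auto
  also have "\<dots> = (if v = w then a \<gamma> else 0)"
    using assms by (subst sum.delta) auto
  finally show ?thesis .
qed

lemma comb_eval:
  assumes "finite F" "\<forall>w\<in>F. a w \<in> group_ring_elems"
  shows "hecke_comb F a v \<gamma> = (if v \<in> F then a v \<gamma> else 0)"
proof -
  have "hecke_comb F a v \<gamma> = (\<Sum>w\<in>F. if v = w then a v \<gamma> else 0)"
    unfolding hecke_comb_def
    by (rule sum.cong[OF HOL.refl]) (use assms in \<open>auto simp: scal_T group_ring_elems_def\<close>)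
  also have "\<dots> = (if v \<in> F then a v \<gamma> else 0)" using assms(1) by (subst sum.delta') auto
  finally show ?thesis .
qed

lemma act_add: "hecke_act W \<sigma> (\<lambda>v \<gamma>. f v \<gamma> + g v \<gamma>) v \<gamma> = hecke_act W \<sigma> f v \<gamma> + hecke_act W \<sigma> g v \<gamma>"
  by (simp add: hecke_act_def)

lemma act_zero: "hecke_act W \<sigma> (\<lambda>v \<gamma>. 0) = (\<lambda>v \<gamma>. 0)"
  by (auto simp add: hecke_act_def)

lemma elems_add:
  assumes "f \<in> hecke_elems W" "g \<in> hecke_elems W"
  shows "(\<lambda>v \<gamma>. f v \<gamma> + g v \<gamma>) \<in> hecke_elems W"
proof -
  have "{(w, \<gamma>). f w \<gamma> + g w \<gamma> \<noteq> 0} \<subseteq> {(w, \<gamma>). f w \<gamma> \<noteq> 0} \<union> {(w, \<gamma>). g w \<gamma> \<noteq> 0}" by auto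
  thus ?thesis using assms unfolding hecke_elems_def by (auto intro: finite_subset)
qed

lemma fixed_add:
  assumes "f \<in> hecke_fixed W K" "g \<in> hecke_fixed W K"
  shows "(\<lambda>v \<gamma>. f v \<gamma> + g v \<gamma>) \<in> hecke_fixed W K"
  using assms unfolding hecke_fixed_def
  by (auto simp: elems_add act_add[abs_def])

lemma zero_fixed: "(\<lambda>v \<gamma>. 0) \<in> hecke_fixed W K"
  by (simp add: hecke_fixed_def hecke_elems_def act_zero)

lemma rel_trace_add: "rel_trace W G K (\<lambda>v \<gamma>. f v \<gamma> + g v \<gamma>) v \<gamma> = rel_trace W G K f v \<gamma> + rel_trace W G K g v \<gamma>"
  by (simp add: rel_trace_def act_add sum.distrib)

lemma rel_trace_zero: "rel_trace W G K (\<lambda>v \<gamma>. 0) v \<gamma> = 0"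
  by (simp add: rel_trace_def act_zero)

lemma trace_add:
  assumes "x \<in> trace_ideal W G" "y \<in> trace_ideal W G"
  shows "(\<lambda>v \<gamma>. x v \<gamma> + y v \<gamma>) \<in> trace_ideal W G"
proof -
  obtain hs where hs: "\<forall>K\<in>proper_subgroups W G. hs K \<in> hecke_fixed W K"
    "x = (\<lambda>v \<gamma>. \<Sum>K\<in>proper_subgroups W G. rel_trace W G K (hs K) v \<gamma>)"
    using assms(1) unfolding trace_ideal_def by blast
  obtain ks where ks: "\<forall>K\<in>proper_subgroups W G. ks K \<in> hecke_fixed W K"
    "y = (\<lambda>v \<gamma>. \<Sum>K\<in>proper_subgroups W G. rel_trace W G K (ks K) v \<gamma>)"
    using assms(2) unfolding trace_ideal_def by blast
  have 1: "\<forall>K\<in>proper_subgroups W G. (\<lambda>v \<gamma>. hs K v \<gamma> + ks K v \<gamma>) \<in> hecke_fixed W K"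
    using hs(1) ks(1) fixed_add by blast
  have 2: "(\<lambda>v \<gamma>. x v \<gamma> + y v \<gamma>) = (\<lambda>v \<gamma>. \<Sum>K\<in>proper_subgroups W G. rel_trace W G K (\<lambda>v \<gamma>. hs K v \<gamma> + ks K v \<gamma>) v \<gamma>)"
    unfolding hs(2) ks(2) rel_trace_add sum.distrib ..
  show ?thesis unfolding trace_ideal_def
    by (rule CollectI, rule exI[of _ "\<lambda>K v \<gamma>. hs K v \<gamma> + ks K v \<gamma>"], rule conjI[OF 1 2])
qed

lemma trace_zero: "(\<lambda>v \<gamma>. 0) \<in> trace_ideal W G"
  unfolding trace_ideal_def
  by (rule CollectI, rule exI[of _ "\<lambda>K v \<gamma>. 0"]) (simp add: zero_fixed rel_trace_zero)

lemma trace_single: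
  assumes fin: "finite G" and K: "K \<in> proper_subgroups W G" and h: "h \<in> hecke_fixed W K"
  shows "rel_trace W G K h \<in> trace_ideal W G"
proof -
  have finP: "finite (proper_subgroups W G)"
    by (rule finite_subset[of _ "Pow G"]) (use fin in \<open>auto simp: proper_subgroups_def\<close>)
  define hs where "hs K' = (if K' = K then h else (\<lambda>v \<gamma>. 0))" for K'
  have "\<forall>K'\<in>proper_subgroups W G. hs K' \<in> hecke_fixed W K'"
    using h zero_fixed by (auto simp add: hs_def)
  moreover have "rel_trace W G K h = (\<lambda>v \<gamma>. \<Sum>K'\<in>proper_subgroups W G. rel_trace W G K' (hs K') v \<gamma>)"
  proof (intro ext)
    fix v \<gamma>
    have "(\<Sum>K'\<in>proper_subgroups W G. rel_trace W G K' (hs K') v \<gamma>)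
       = (\<Sum>K'\<in>proper_subgroups W G. if K' = K then rel_trace W G K h v \<gamma> else 0)"
      by (rule sum.cong[OF HOL.refl]) (simp add: hs_def rel_trace_zero)
    also have "\<dots> = rel_trace W G K h v \<gamma>" using finP K by simp
    finally show "rel_trace W G K h v \<gamma> = (\<Sum>K'\<in>proper_subgroups W G. rel_trace W G K' (hs K') v \<gamma>)" ..
  qed
  ultimately show ?thesis unfolding trace_ideal_def by blast
qed

lemma reps_props:
  assumes grp: "group W" and G: "subgroup G (AutoGroup W)" and K: "K \<in> proper_subgroups W G"
  defines "R \<equiv> SOME R. R \<in> left_coset_reps W G K"
  shows "R \<subseteq> G" "\<forall>\<tau>\<in>G. \<exists>!\<sigma>. \<sigma> \<in> R \<and> \<tau> \<in> \<sigma> <#\<^bsub>AutoGroup W\<^esub> K"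
proof -
  interpret A: group "AutoGroup W" by (rule group.AutoGroup[OF grp])
  have Ks: "subgroup K (AutoGroup W)" "K \<subset> G" using K by (auto simp: proper_subgroups_def)
  have KG: "K \<subseteq> G" using Ks(2) by (rule psubset_imp_subset)
  obtain R0 where R0: "R0 \<subseteq> G \<and> (\<forall>\<tau>\<in>G. \<exists>!\<sigma>. \<sigma> \<in> R0 \<and> \<tau> \<in> \<sigma> <#\<^bsub>AutoGroup W\<^esub> K)"
    using A.lcoset_reps_exist[OF G Ks(1) KG] by (elim exE)
  have "R0 \<in> left_coset_reps W G K" unfolding left_coset_reps_def using R0 by (rule CollectI)
  hence "R \<in> left_coset_reps W G K" unfolding R_def by (rule someI)
  hence "R \<subseteq> G \<and> (\<forall>\<tau>\<in>G. \<exists>!\<sigma>. \<sigma> \<in> R \<and> \<tau> \<in> \<sigma> <#\<^bsub>AutoGroup W\<^esub> K)"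
    unfolding left_coset_reps_def by (rule CollectD)
  thus "R \<subseteq> G" "\<forall>\<tau>\<in>G. \<exists>!\<sigma>. \<sigma> \<in> R \<and> \<tau> \<in> \<sigma> <#\<^bsub>AutoGroup W\<^esub> K"
    by (rule conjunct1, rule conjunct2)
qed

lemma trace_fixed_dvd:
  assumes grp: "group W" and G: "subgroup G (AutoGroup W)" "finite G" "card G = p ^ n"
    and p: "Factorial_Ring.prime p"
    and K: "K \<in> proper_subgroups W G" and w: "w \<in> fixed_elems W G"
  shows "int p dvd rel_trace W G K h w \<gamma>"
proof -
  interpret A: group "AutoGroup W" by (rule group.AutoGroup[OF grp])
  define R where "R = (SOME R. R \<in> left_coset_reps W G K)"
  have R: "R \<subseteq> G" "\<forall>\<tau>\<in>G. \<exists>!\<sigma>. \<sigma> \<in> R \<and> \<tau> \<in> \<sigma> <#\<^bsub>AutoGroup W\<^esub> K"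
    unfolding R_def by (rule reps_props(1)[OF grp G(1) K], rule reps_props(2)[OF grp G(1) K])
  have Ks: "subgroup K (AutoGroup W)" "K \<subset> G" using K by (auto simp: proper_subgroups_def)
  have cG: "card G = card R * card K"
    by (rule A.lcoset_reps_card[OF G(1) Ks(1) psubset_imp_subset[OF Ks(2)] G(2) R])
  have finK: "finite K" by (rule finite_subset[OF psubset_imp_subset[OF Ks(2)] G(2)])
  have "card K < card G" by (rule psubset_card_mono[OF G(2) Ks(2)])
  hence R1: "card R \<noteq> 1" using cG by auto
  have "card R dvd p ^ n" unfolding G(3)[symmetric] cG by (rule dvd_triv_left)
  then obtain m where "m \<le> n" "normalize (card R) = p ^ m" using divides_primepow[OF p] by blast
  hence "card R = p ^ m" by simp
  with R1 have m: "m \<noteq> 0" by (cases m) auto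
  hence pdv: "p dvd card R" using \<open>card R = p ^ m\<close> by (simp add: dvd_power)
  have "rel_trace W G K h w \<gamma> = (\<Sum>\<sigma>\<in>R. h w \<gamma>)"
    unfolding rel_trace_def R_def[symmetric]
  proof (rule sum.cong[OF HOL.refl])
    fix \<sigma> assume s: "\<sigma> \<in> R"
    hence sG: "\<sigma> \<in> G" using R(1) by blast
    hence sc: "\<sigma> \<in> carrier (AutoGroup W)" by (rule subgroup.mem_carrier[OF G(1)])
    have wc: "w \<in> carrier W" and sw: "\<sigma> w = w" using w sG by (auto simp: fixed_elems_def)
    have "inv_into (carrier W) \<sigma> (\<sigma> w) = w"
      using bij_betw_inv_into_left[OF AG_bij[OF sc] wc] .
    hence "inv_into (carrier W) \<sigma> w = w" using sw by simp
    thus "hecke_act W \<sigma> h w \<gamma> = h w \<gamma>" using wc by (simp add: hecke_act_def)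
  qed
  also have "\<dots> = int (card R) * h w \<gamma>" by simp
  moreover have "int p dvd int (card R)" using pdv by (simp only: of_nat_dvd_iff)
  ultimately show ?thesis by (metis dvd_mult2)
qed

lemma indep:
  assumes grp: "group W" and G: "subgroup G (AutoGroup W)" "finite G" "card G = p ^ n"
    and p: "Factorial_Ring.prime p"
    and F: "finite F" "F \<subseteq> fixed_elems W G" "\<forall>w\<in>F. a w \<in> group_ring_elems"
    and tr: "hecke_comb F a \<in> trace_ideal W G"
  shows "\<forall>w\<in>F. \<forall>\<gamma>. int p dvd a w \<gamma>"
proof (intro ballI allI)
  fix w \<gamma> assume w: "w \<in> F"
  obtain hs where hs: "hecke_comb F a = (\<lambda>v \<gamma>. \<Sum>K\<in>proper_subgroups W G. rel_trace W G K (hs K) v \<gamma>)"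
    using tr unfolding trace_ideal_def by blast
  have "a w \<gamma> = hecke_comb F a w \<gamma>" using comb_eval[OF F(1) F(3)] w by simp
  also have "\<dots> = (\<Sum>K\<in>proper_subgroups W G. rel_trace W G K (hs K) w \<gamma>)" using hs by simp
  finally have e: "a w \<gamma> = \<dots>" .
  have "int p dvd (\<Sum>K\<in>proper_subgroups W G. rel_trace W G K (hs K) w \<gamma>)"
  proof (rule dvd_sum)
    fix K assume "K \<in> proper_subgroups W G"
    moreover have "w \<in> fixed_elems W G" using w F(2) by blast
    ultimately show "int p dvd rel_trace W G K (hs K) w \<gamma>" by (rule trace_fixed_dvd[OF grp G p])
  qed
  thus "int p dvd a w \<gamma>" using e by simp
qed

lemma orbit_trace:
  fixes \<gamma> :: 'g and c :: int
  assumes grp: "group W" and G: "subgroup G (AutoGroup W)" "finite G"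
    and w: "w \<in> carrier W" "\<exists>\<sigma>\<in>G. \<sigma> w \<noteq> w"
  defines "K \<equiv> {\<sigma>\<in>G. \<sigma> w = w}"
    and "h \<equiv> (\<lambda>v \<delta>. if v = w \<and> \<delta> = \<gamma> then c else 0)"
    and "T \<equiv> (\<lambda>v \<delta>. if (\<exists>\<tau>\<in>G. v = \<tau> w) \<and> \<delta> = \<gamma> then c else (0::int))"
  shows "K \<in> proper_subgroups W G" "h \<in> hecke_fixed W K" "rel_trace W G K h = T"
proof -
  interpret A: group "AutoGroup W" by (rule group.AutoGroup[OF grp])
  have Gc: "\<And>\<sigma>. \<sigma> \<in> G \<Longrightarrow> \<sigma> \<in> carrier (AutoGroup W)" by (rule subgroup.mem_carrier[OF G(1)])
  have invK: "\<And>\<sigma>. \<sigma> \<in> K \<Longrightarrow> inv\<^bsub>AutoGroup W\<^esub> \<sigma> \<in> K"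
  proof -
    fix \<sigma> assume "\<sigma> \<in> K"
    hence s: "\<sigma> \<in> G" "\<sigma> w = w" by (auto simp: K_def)
    have "(inv\<^bsub>AutoGroup W\<^esub> \<sigma>) w = w" using AG_inv_app[OF grp Gc[OF s(1)] w(1)] s(2) by simp
    thus "inv\<^bsub>AutoGroup W\<^esub> \<sigma> \<in> K" using s G(1) by (simp add: K_def subgroup.m_inv_closed)
  qed
  have Ksub: "subgroup K (AutoGroup W)"
  proof (rule A.subgroupI)
    show "K \<subseteq> carrier (AutoGroup W)" using Gc by (auto simp: K_def)
    show "K \<noteq> {}" using AG_one[OF w(1)] G(1) by (auto simp: K_def intro!: exI[of _ "\<one>\<^bsub>AutoGroup W\<^esub>"] subgroup.one_closed)
    show "\<And>a. a \<in> K \<Longrightarrow> inv\<^bsub>AutoGroup W\<^esub> a \<in> K" by (rule invK)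
    show "\<And>a b. a \<in> K \<Longrightarrow> b \<in> K \<Longrightarrow> a \<otimes>\<^bsub>AutoGroup W\<^esub> b \<in> K"
    proof -
      fix a b assume ab: "a \<in> K" "b \<in> K"
      hence "a \<in> G" "b \<in> G" "a w = w" "b w = w" by (auto simp: K_def)
      moreover have "(a \<otimes>\<^bsub>AutoGroup W\<^esub> b) w = a (b w)" using AG_mult[OF Gc Gc w(1)] \<open>a \<in> G\<close> \<open>b \<in> G\<close> by simp
      ultimately show "a \<otimes>\<^bsub>AutoGroup W\<^esub> b \<in> K" using G(1) by (simp add: K_def subgroup.m_closed)
    qed
  qed
  have "K \<subset> G" using w(2) by (auto simp: K_def)
  thus KP: "K \<in> proper_subgroups W G" using Ksub by (simp add: proper_subgroups_def)
  have hel: "h \<in> hecke_elems W"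
  proof -
    have "{(v, \<delta>). h v \<delta> \<noteq> 0} \<subseteq> {(w, \<gamma>)}" by (auto simp: h_def split: if_splits)
    thus ?thesis using w(1) unfolding hecke_elems_def by (auto intro: finite_subset simp: h_def)
  qed
  show "h \<in> hecke_fixed W K"
    unfolding hecke_fixed_def
  proof (intro CollectI conjI ballI hel)
    fix \<sigma> assume s: "\<sigma> \<in> K"
    hence sc: "\<sigma> \<in> carrier (AutoGroup W)" "\<sigma> w = w" using Gc by (auto simp: K_def)
    have b: "bij_betw \<sigma> (carrier W) (carrier W)" by (rule AG_bij[OF sc(1)])
    have "\<forall>u\<in>carrier W. h (\<sigma> u) = h u"
    proof
      fix u assume u: "u \<in> carrier W"
      have "\<sigma> u = \<sigma> w \<longleftrightarrow> u = w" using inj_on_eq_iff[OF bij_betw_imp_inj_on[OF b] u w(1)] .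
      hence "\<sigma> u = w \<longleftrightarrow> u = w" using sc(2) by simp
      thus "h (\<sigma> u) = h u" by (simp add: h_def)
    qed
    thus "hecke_act W \<sigma> h = h" using act_fixed_iff[OF hel b] by blast
  qed
  define R where "R = (SOME R. R \<in> left_coset_reps W G K)"
  have R: "R \<subseteq> G" "\<forall>\<tau>\<in>G. \<exists>!\<sigma>. \<sigma> \<in> R \<and> \<tau> \<in> \<sigma> <#\<^bsub>AutoGroup W\<^esub> K"
    unfolding R_def by (rule reps_props(1)[OF grp G(1) KP], rule reps_props(2)[OF grp G(1) KP])
  have finR: "finite R" by (rule finite_subset[OF R(1) G(2)])
  have act: "hecke_act W \<sigma> h v \<delta> = (if v \<in> carrier W \<and> \<sigma> w = v \<and> \<delta> = \<gamma> then c else 0)"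
    if s: "\<sigma> \<in> G" for \<sigma> v \<delta>
  proof -
    have b: "bij_betw \<sigma> (carrier W) (carrier W)" by (rule AG_bij[OF Gc[OF s]])
    have "inv_into (carrier W) \<sigma> v = w \<longleftrightarrow> \<sigma> w = v" if vc: "v \<in> carrier W"
    proof
      assume "inv_into (carrier W) \<sigma> v = w"
      moreover have "\<sigma> (inv_into (carrier W) \<sigma> v) = v" using bij_betw_inv_into_right[OF b vc] .
      ultimately show "\<sigma> w = v" by simp
    next
      assume "\<sigma> w = v"
      thus "inv_into (carrier W) \<sigma> v = w" using bij_betw_inv_into_left[OF b w(1)] by simp
    qed
    thus ?thesis by (auto simp: hecke_act_def h_def)
  qed
  show "rel_trace W G K h = T"
  proof (intro ext)
    fix v \<delta>
    have "rel_trace W G K h v \<delta> = (\<Sum>\<sigma>\<in>R. if v \<in> carrier W \<and> \<sigma> w = v \<and> \<delta> = \<gamma> then c else 0)"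
      unfolding rel_trace_def R_def[symmetric] by (rule sum.cong[OF HOL.refl], rule act) (use R(1) in blast)
    also have "\<dots> = T v \<delta>"
    proof (cases "(\<exists>\<tau>\<in>G. v = \<tau> w) \<and> \<delta> = \<gamma>")
      case False
      hence "\<And>\<sigma>. \<sigma> \<in> R \<Longrightarrow> \<not> (v \<in> carrier W \<and> \<sigma> w = v \<and> \<delta> = \<gamma>)" using R(1) by blast
      hence "(\<Sum>\<sigma>\<in>R. if v \<in> carrier W \<and> \<sigma> w = v \<and> \<delta> = \<gamma> then c else 0) = (\<Sum>\<sigma>\<in>R. 0)"
        by (intro sum.cong[OF HOL.refl]) auto
      moreover have "T v \<delta> = 0" using False unfolding T_def by auto
      ultimately show ?thesis by simp
    next
      case True
      then obtain \<tau> where t: "\<tau> \<in> G" "v = \<tau> w" "\<delta> = \<gamma>" by blast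
      obtain \<sigma>0 where s0: "\<sigma>0 \<in> R" "\<tau> \<in> \<sigma>0 <#\<^bsub>AutoGroup W\<^esub> K"
        and s0u: "\<And>\<sigma>. \<sigma> \<in> R \<Longrightarrow> \<tau> \<in> \<sigma> <#\<^bsub>AutoGroup W\<^esub> K \<Longrightarrow> \<sigma> = \<sigma>0"
        using R(2) t(1) by (elim ballE ex1E) blast+
      have vc: "v \<in> carrier W" using bij_betwE[OF AG_bij[OF Gc[OF t(1)]]] t(2) w(1) by blast
      have s0G: "\<sigma>0 \<in> G" using s0 R(1) by blast
      have "\<sigma> w = v \<longleftrightarrow> \<sigma> = \<sigma>0" if s: "\<sigma> \<in> R" for \<sigma>
      proof
        assume sw: "\<sigma> w = v"
        have sG: "\<sigma> \<in> G" using s R(1) by blast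
        define k where "k = inv\<^bsub>AutoGroup W\<^esub> \<sigma> \<otimes>\<^bsub>AutoGroup W\<^esub> \<tau>"
        have kG: "k \<in> G" unfolding k_def using G(1) sG t(1) by (simp add: subgroup.m_closed subgroup.m_inv_closed)
        have "k w = (inv\<^bsub>AutoGroup W\<^esub> \<sigma>) (\<tau> w)" unfolding k_def
          by (rule AG_mult[OF A.inv_closed[OF Gc[OF sG]] Gc[OF t(1)] w(1)])
        also have "\<dots> = w" using t(2) sw AG_inv_app[OF grp Gc[OF sG] w(1)] by simp
        finally have "k \<in> K" using kG by (simp add: K_def)
        moreover have "\<tau> = \<sigma> \<otimes>\<^bsub>AutoGroup W\<^esub> k" unfolding k_def
          using Gc[OF sG] Gc[OF t(1)] by (simp add: A.m_assoc[symmetric])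
        ultimately have "\<tau> \<in> \<sigma> <#\<^bsub>AutoGroup W\<^esub> K" unfolding l_coset_def by blast
        thus "\<sigma> = \<sigma>0" using s0u s by blast
      next
        assume "\<sigma> = \<sigma>0"
        from s0(2) obtain k where k: "k \<in> K" "\<tau> = \<sigma>0 \<otimes>\<^bsub>AutoGroup W\<^esub> k" unfolding l_coset_def by blast
        have kG: "k \<in> G" "k w = w" using k(1) by (auto simp: K_def)
        have "\<tau> w = \<sigma>0 (k w)" by (simp add: k(2) AG_mult[OF Gc[OF s0G] Gc[OF kG(1)] w(1)])
        thus "\<sigma> w = v" using k(1) t(2) \<open>\<sigma> = \<sigma>0\<close> by (simp add: K_def)
      qed
      hence "(\<Sum>\<sigma>\<in>R. if v \<in> carrier W \<and> \<sigma> w = v \<and> \<delta> = \<gamma> then c else 0) = (\<Sum>\<sigma>\<in>R. if \<sigma> = \<sigma>0 then c else 0)"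
        using vc t(3) by (intro sum.cong[OF HOL.refl]) auto
      also have "\<dots> = c" using finR s0(1) by simp
      finally show ?thesis using True by (simp add: T_def)
    qed
    finally show "rel_trace W G K h v \<delta> = T v \<delta>" .
  qed
qed

lemma fixed_mem_iff:
  assumes grp: "group W" and G: "subgroup G (AutoGroup W)" and s: "\<sigma> \<in> G" and u: "u \<in> carrier W"
  shows "\<sigma> u \<in> fixed_elems W G \<longleftrightarrow> u \<in> fixed_elems W G"
proof
  interpret A: group "AutoGroup W" by (rule group.AutoGroup[OF grp])
  have sc: "\<sigma> \<in> carrier (AutoGroup W)" using s by (rule subgroup.mem_carrier[OF G])
  have iG: "inv\<^bsub>AutoGroup W\<^esub> \<sigma> \<in> G" using s by (rule subgroup.m_inv_closed[OF G])
  assume "\<sigma> u \<in> fixed_elems W G"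
  hence "(inv\<^bsub>AutoGroup W\<^esub> \<sigma>) (\<sigma> u) = \<sigma> u" using iG by (auto simp: fixed_elems_def)
  hence "u = \<sigma> u" using AG_inv_app[OF grp sc u] by simp
  thus "u \<in> fixed_elems W G" using \<open>\<sigma> u \<in> fixed_elems W G\<close> by simp
next
  assume uf: "u \<in> fixed_elems W G"
  hence "\<sigma> u = u" using s by (auto simp: fixed_elems_def)
  thus "\<sigma> u \<in> fixed_elems W G" using uf by simp
qed

lemma fixed_inv:
  assumes "y \<in> hecke_fixed W G" "\<sigma> \<in> G" "u \<in> carrier W" "\<sigma> \<in> carrier (AutoGroup W)"
  shows "y (\<sigma> u) = y u"
proof -
  have "y \<in> hecke_elems W" "hecke_act W \<sigma> y = y" using assms(1,2) by (auto simp: hecke_fixed_def)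
  thus ?thesis using act_fixed_iff[OF _ AG_bij[OF assms(4)]] assms(3) by blast
qed

lemma span_nonfixed:
  fixes y
  assumes grp: "group W" and G: "subgroup G (AutoGroup W)" "finite G"
  shows "y \<in> hecke_fixed W G \<Longrightarrow> (\<forall>v\<in>fixed_elems W G. \<forall>\<delta>. y v \<delta> = 0) \<Longrightarrow> y \<in> trace_ideal W G"
proof (induction y rule: measure_induct_rule[where f="\<lambda>y. card {(v, \<delta>). y v \<delta> \<noteq> 0}"])
  case (less y)
  interpret A: group "AutoGroup W" by (rule group.AutoGroup[OF grp])
  have Gc: "\<And>\<sigma>. \<sigma> \<in> G \<Longrightarrow> \<sigma> \<in> carrier (AutoGroup W)" by (rule subgroup.mem_carrier[OF G(1)])
  define S where "S = {(v, \<delta>). y v \<delta> \<noteq> 0}"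
  have yel: "y \<in> hecke_elems W" using less.prems(1) by (simp add: hecke_fixed_def)
  hence finS: "finite S" unfolding S_def hecke_elems_def by simp
  have out: "\<And>v. v \<notin> carrier W \<Longrightarrow> y v = (\<lambda>\<gamma>. 0)" using yel by (simp add: hecke_elems_def)
  have yinv: "\<And>\<sigma> u. \<sigma> \<in> G \<Longrightarrow> u \<in> carrier W \<Longrightarrow> y (\<sigma> u) = y u"
    using fixed_inv[OF less.prems(1)] Gc by blast
  show ?case
  proof (cases "S = {}")
    case True
    hence "y = (\<lambda>v \<gamma>. 0)" unfolding S_def by (auto intro!: ext)
    thus ?thesis using trace_zero by simp
  next
    case False
    then obtain w \<gamma> where wg: "(w, \<gamma>) \<in> S" by auto
    define c where "c = y w \<gamma>"
    have c0: "c \<noteq> 0" using wg by (simp add: S_def c_def)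
    have wc: "w \<in> carrier W" using out c0 c_def by fastforce
    have wnf: "w \<notin> fixed_elems W G" using less.prems(2) c0 c_def by auto
    hence wmove: "\<exists>\<sigma>\<in>G. \<sigma> w \<noteq> w" using wc by (auto simp: fixed_elems_def)
    define K where "K = {\<sigma>\<in>G. \<sigma> w = w}"
    define h where "h = (\<lambda>v \<delta>. if v = w \<and> \<delta> = \<gamma> then c else (0::int))"
    define T where "T = (\<lambda>v \<delta>. if (\<exists>\<tau>\<in>G. v = \<tau> w) \<and> \<delta> = \<gamma> then c else (0::int))"
    have ot1: "K \<in> proper_subgroups W G" unfolding K_def by (rule orbit_trace(1)[OF grp G wc wmove])
    have ot2: "h \<in> hecke_fixed W K" unfolding K_def h_def by (rule orbit_trace(2)[OF grp G wc wmove])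
    have ot3: "rel_trace W G K h = T" unfolding K_def h_def T_def by (rule orbit_trace(3)[OF grp G wc wmove])
    note ot = ot1 ot2 ot3
    have Ttr: "T \<in> trace_ideal W G" using trace_single[OF G(2) ot(1) ot(2)] ot(3) by simp
    have orbc: "\<And>\<tau>. \<tau> \<in> G \<Longrightarrow> \<tau> w \<in> carrier W"
      using wc AG_bij Gc bij_betwE by metis
    have yorb: "\<And>\<tau>. \<tau> \<in> G \<Longrightarrow> y (\<tau> w) \<gamma> = c" using yinv wc c_def by simp
    define y' where "y' = (\<lambda>v \<delta>. y v \<delta> - T v \<delta>)"
    have sub: "{(v, \<delta>). y' v \<delta> \<noteq> 0} \<subseteq> S"
    proof (rule subsetI, clarify)
      fix v \<delta> assume ne: "y' v \<delta> \<noteq> 0"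
      show "(v, \<delta>) \<in> S"
      proof (cases "(\<exists>\<tau>\<in>G. v = \<tau> w) \<and> \<delta> = \<gamma>")
        case True
        hence "T v \<delta> = c" unfolding T_def by simp
        moreover obtain \<tau> where "\<tau> \<in> G" "v = \<tau> w" "\<delta> = \<gamma>" using True by auto
        ultimately have "y' v \<delta> = 0" using yorb by (simp add: y'_def)
        thus ?thesis using ne by simp
      next
        case False
        hence "T v \<delta> = 0" unfolding T_def by auto
        thus ?thesis using ne by (simp add: y'_def S_def)
      qed
    qed
    have notin: "(w, \<gamma>) \<notin> {(v, \<delta>). y' v \<delta> \<noteq> 0}"
    proof -
      have "\<one>\<^bsub>AutoGroup W\<^esub> \<in> G" by (rule subgroup.one_closed[OF G(1)])
      moreover have "w = \<one>\<^bsub>AutoGroup W\<^esub> w" using AG_one[OF wc] by simp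
      ultimately have "T w \<gamma> = c" unfolding T_def by auto
      thus ?thesis by (simp add: y'_def c_def)
    qed
    have lt: "card {(v, \<delta>). y' v \<delta> \<noteq> 0} < card {(v, \<delta>). y v \<delta> \<noteq> 0}"
      unfolding S_def[symmetric]
      by (rule psubset_card_mono[OF finS]) (use sub notin wg in blast)
    have Tinv: "T (\<sigma> u) = T u" if s: "\<sigma> \<in> G" and u: "u \<in> carrier W" for \<sigma> u
    proof -
      have "(\<exists>\<tau>\<in>G. \<sigma> u = \<tau> w) \<longleftrightarrow> (\<exists>\<tau>\<in>G. u = \<tau> w)"
      proof
        assume "\<exists>\<tau>\<in>G. \<sigma> u = \<tau> w"
        then obtain \<tau> where t: "\<tau> \<in> G" "\<sigma> u = \<tau> w" by blast
        have iG: "inv\<^bsub>AutoGroup W\<^esub> \<sigma> \<in> G" using s by (rule subgroup.m_inv_closed[OF G(1)])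
        have "u = (inv\<^bsub>AutoGroup W\<^esub> \<sigma>) (\<sigma> u)" using AG_inv_app[OF grp Gc[OF s] u] by simp
        also have "\<dots> = (inv\<^bsub>AutoGroup W\<^esub> \<sigma> \<otimes>\<^bsub>AutoGroup W\<^esub> \<tau>) w"
          using t(2) AG_mult[OF Gc[OF iG] Gc[OF t(1)] wc] by simp
        finally show "\<exists>\<tau>\<in>G. u = \<tau> w" using subgroup.m_closed[OF G(1) iG t(1)] by blast
      next
        assume "\<exists>\<tau>\<in>G. u = \<tau> w"
        then obtain \<tau> where t: "\<tau> \<in> G" "u = \<tau> w" by blast
        have "\<sigma> u = (\<sigma> \<otimes>\<^bsub>AutoGroup W\<^esub> \<tau>) w" using t(2) AG_mult[OF Gc[OF s] Gc[OF t(1)] wc] by simp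
        thus "\<exists>\<tau>\<in>G. \<sigma> u = \<tau> w" using subgroup.m_closed[OF G(1) s t(1)] by blast
      qed
      thus ?thesis unfolding T_def by simp
    qed
    have Tout: "\<And>v \<delta>. v \<notin> carrier W \<Longrightarrow> T v \<delta> = 0" using orbc unfolding T_def by auto
    have y'el: "y' \<in> hecke_elems W"
    proof -
      have "finite {(v, \<delta>). y' v \<delta> \<noteq> 0}" using sub finS by (rule finite_subset)
      moreover have "\<forall>v. v \<notin> carrier W \<longrightarrow> y' v = (\<lambda>\<gamma>. 0)"
        using out Tout by (auto simp: y'_def)
      ultimately show ?thesis unfolding hecke_elems_def by simp
    qed
    have y'fix: "y' \<in> hecke_fixed W G"
      unfolding hecke_fixed_def
    proof (intro CollectI conjI ballI y'el)
      fix \<sigma> assume s: "\<sigma> \<in> G"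
      have "\<forall>u\<in>carrier W. y' (\<sigma> u) = y' u"
        using yinv[OF s] Tinv[OF s] by (auto simp: y'_def)
      thus "hecke_act W \<sigma> y' = y'" using act_fixed_iff[OF y'el AG_bij[OF Gc[OF s]]] by blast
    qed
    have y'0: "\<forall>v\<in>fixed_elems W G. \<forall>\<delta>. y' v \<delta> = 0"
    proof (intro ballI allI)
      fix v \<delta> assume vf: "v \<in> fixed_elems W G"
      have "T v \<delta> = 0"
      proof (rule ccontr)
        assume "T v \<delta> \<noteq> 0"
        then obtain \<tau> where t: "\<tau> \<in> G" "v = \<tau> w" unfolding T_def by (auto split: if_splits)
        hence "w \<in> fixed_elems W G" using fixed_mem_iff[OF grp G(1) t(1) wc] vf by simp
        thus False using wnf by simp
      qed
      thus "y' v \<delta> = 0" using less.prems(2) vf by (simp add: y'_def)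
    qed
    have "y' \<in> trace_ideal W G" using less.IH[OF lt y'fix y'0] .
    hence "(\<lambda>v \<delta>. y' v \<delta> + T v \<delta>) \<in> trace_ideal W G" using Ttr by (rule trace_add)
    moreover have "(\<lambda>v \<delta>. y' v \<delta> + T v \<delta>) = y" by (simp add: y'_def)
    ultimately show ?thesis by simp
  qed
qed

theorem corollary2p3:
  fixes W :: "'w monoid" and S :: "'w set" and \<phi> :: "'w \<Rightarrow> 'g::linordered_ab_group_add"
    and p :: nat and G :: "('w \<Rightarrow> 'w) set"
  assumes "coxeter_system W S" and "finite S"
    and "weight_function W S \<phi>"
    and "Factorial_Ring.prime p"
    and "subgroup G (AutoGroup W)" and "finite G" and "\<exists>n. card G = p ^ n"
    and "\<forall>\<sigma>\<in>G. \<sigma> ` S = S"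
    and "\<forall>\<sigma>\<in>G. \<forall>w\<in>carrier W. \<phi> (\<sigma> w) = \<phi> w"
  shows "brauer_basis p W G TYPE('g)"
proof -
  have grp: "group W" using assms(1) by (simp add: coxeter_system_def)
  have G: "subgroup G (AutoGroup W)" "finite G" using assms(5,6) .
  obtain n where n: "card G = p ^ n" using assms(7) by blast
  have Gc: "\<And>\<sigma>. \<sigma> \<in> G \<Longrightarrow> \<sigma> \<in> carrier (AutoGroup W)" by (rule subgroup.mem_carrier[OF G(1)])
  have part1: "\<exists>F a. finite F \<and> F \<subseteq> fixed_elems W G \<and> (\<forall>w\<in>F. a w \<in> group_ring_elems) \<and>
              (\<lambda>v \<gamma>. x v \<gamma> - hecke_comb F a v \<gamma>) \<in> trace_ideal W G"
    if x: "x \<in> (hecke_fixed W G :: ('w \<Rightarrow> 'g \<Rightarrow> int) set)" for x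
  proof -
    define S where "S = {(v, \<delta>). x v \<delta> \<noteq> 0}"
    have xel: "x \<in> hecke_elems W" using x by (simp add: hecke_fixed_def)
    hence finS: "finite S" unfolding S_def hecke_elems_def by simp
    have out: "\<And>v. v \<notin> carrier W \<Longrightarrow> x v = (\<lambda>\<gamma>. 0)" using xel by (simp add: hecke_elems_def)
    define F where "F = {w \<in> fixed_elems W G. \<exists>\<gamma>. x w \<gamma> \<noteq> 0}"
    have finF: "finite F"
    proof (rule finite_subset[OF _ finite_imageI[OF finS, of fst]])
      show "F \<subseteq> fst ` S" unfolding F_def S_def by (auto simp: image_iff)
    qed
    have FF: "F \<subseteq> fixed_elems W G" unfolding F_def by auto
    have ga: "\<forall>w\<in>F. x w \<in> group_ring_elems"
    proof
      fix w
      have "{\<gamma>. x w \<gamma> \<noteq> 0} \<subseteq> snd ` S" unfolding S_def by (auto simp: image_iff)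
      thus "x w \<in> group_ring_elems" unfolding group_ring_elems_def
        using finite_subset finite_imageI[OF finS] by blast
    qed
    define y where "y = (\<lambda>v \<gamma>. if v \<in> fixed_elems W G then 0 else x v \<gamma>)"
    have ye: "(\<lambda>v \<gamma>. x v \<gamma> - hecke_comb F x v \<gamma>) = y"
    proof (intro ext)
      fix v \<gamma>
      show "x v \<gamma> - hecke_comb F x v \<gamma> = y v \<gamma>"
      proof -
        have "hecke_comb F x v \<gamma> = (if v \<in> F then x v \<gamma> else 0)" by (rule comb_eval[OF finF ga])
        thus ?thesis unfolding y_def F_def by auto
      qed
    qed
    have yel: "y \<in> hecke_elems W"
    proof -
      have "{(v, \<delta>). y v \<delta> \<noteq> 0} \<subseteq> S" unfolding S_def y_def by auto
      hence "finite {(v, \<delta>). y v \<delta> \<noteq> 0}" using finS by (rule finite_subset)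
      moreover have "\<forall>v. v \<notin> carrier W \<longrightarrow> y v = (\<lambda>\<gamma>. 0)" using out by (auto simp: y_def)
      ultimately show ?thesis unfolding hecke_elems_def by simp
    qed
    have yfix: "y \<in> hecke_fixed W G"
      unfolding hecke_fixed_def
    proof (intro CollectI conjI ballI yel)
      fix \<sigma> assume s: "\<sigma> \<in> G"
      have "\<forall>u\<in>carrier W. y (\<sigma> u) = y u"
      proof
        fix u assume u: "u \<in> carrier W"
        have xe: "x (\<sigma> u) = x u" by (rule fixed_inv[OF x s u Gc[OF s]])
        have fe: "(\<sigma> u \<in> fixed_elems W G) = (u \<in> fixed_elems W G)" by (rule fixed_mem_iff[OF grp G(1) s u])
        show "y (\<sigma> u) = y u" unfolding y_def by (rule ext) (simp only: xe fe)
      qed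
      thus "hecke_act W \<sigma> y = y" using act_fixed_iff[OF yel AG_bij[OF Gc[OF s]]] by blast
    qed
    have "y \<in> trace_ideal W G"
      by (rule span_nonfixed[OF grp G yfix]) (simp add: y_def)
    hence "(\<lambda>v \<gamma>. x v \<gamma> - hecke_comb F x v \<gamma>) \<in> trace_ideal W G" using ye by simp
    thus ?thesis using finF FF ga by blast
  qed
  show ?thesis
    unfolding brauer_basis_def
  proof (intro conjI ballI allI impI)
    fix x assume "x \<in> (hecke_fixed W G :: ('w \<Rightarrow> 'g \<Rightarrow> int) set)"
    thus "\<exists>F a. finite F \<and> F \<subseteq> fixed_elems W G \<and> (\<forall>w\<in>F. a w \<in> group_ring_elems) \<and>
              (\<lambda>v \<gamma>. x v \<gamma> - hecke_comb F a v \<gamma>) \<in> trace_ideal W G" by (rule part1)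
  next
    fix F and a :: "'w \<Rightarrow> 'g \<Rightarrow> int" and w \<gamma>
    assume h: "finite F \<and> F \<subseteq> fixed_elems W G \<and> (\<forall>w\<in>F. a w \<in> group_ring_elems) \<and> hecke_comb F a \<in> trace_ideal W G"
      and w: "w \<in> F"
    show "int p dvd a w \<gamma>"
      using indep[OF grp G n assms(4)] h w by blast
  qed
qed

end
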